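(* For both \textsc{OneMinMax} and \textsc{LOTZ}, the crowding distance contribution $\mathrm{CDC}(x,P)$ is diversity-favouring on $\{0,1\}^n\setminus\{0^n,1^n\}$.
   Context: Search space $\{0,1\}^n$; objectives maximised. $\textsc{OneMinMax}(x)=(\sum_ix_i,\,n-\sum_ix_i)$; $\textsc{LOTZ}(x)=(\mathrm{LO}(x),\mathrm{TZ}(x))$ with $\mathrm{LO}$ the number of leading ones and $\mathrm{TZ}$ the number of trailing zeros. Dominance: $y$ dominates $x$ if $f_i(y)\ge f_i(x)$ for all $i$, strictly for some $i$. Pareto set $X^*$, front $F^*=f(X^* )$. Populations $P$ are sets of mutually non-dominated points with distinct objective vectors. CDC: every point of $P$ starts with distance 0; for each objective $m$, sort $P$ ascending by $f_m$ as $P[1],\dots,P[l]$, set the distance of $P[1]$ and $P[l]$ to $\infty$, and for $2\le i\le l-1$ add $(f_m(P[i+1])-f_m(P[i-1]))/(f_m^{\max}-f_m^{\min})$, where $f_m^{\max},f_m^{\min}$ are the maximum and minimum values of objective $m$. Good: w.r.t. $P$, $x\in P\cap X^*$ is good if some Hamming neighbour $y$ of $x$ satisfies $y\in X^*$ and $f(y)\notin f(P)$; otherwise bad. A measure is diversity-favouring on $S$ (w.r.t. $f$) if for every population $P$ and all $x,y\in P\cap X^*\cap S$ with $x$ bad and $y$ good, $\mathrm{score}(x,P)<\mathrm{score}(y,P)$. *)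

theory Defs
  imports "HOL-Library.Extended_Real"
begin

text \<open>Bit strings of length n are bool lists (True = 1, False = 0).
Bi-objective functions map to pairs of naturals (both maximised).\<close>

type_synonym bitstr = "bool list"
type_synonym biobj = "bitstr \<Rightarrow> nat \<times> nat"

definition cube :: "nat \<Rightarrow> bitstr set" where
  "cube n = {x. length x = n}"

definition oneminmax :: biobj where
  "oneminmax x = (length (filter id x), length x - length (filter id x))"

definition LO :: "bitstr \<Rightarrow> nat" where
  "LO x = length (takeWhile id x)"

definition TZ :: "bitstr \<Rightarrow> nat" where
  "TZ x = length (takeWhile Not (rev x))"

definition lotz :: biobj where
  "lotz x = (LO x, TZ x)"

definition dominates :: "biobj \<Rightarrow> bitstr \<Rightarrow> bitstr \<Rightarrow> bool" where
  "dominates f y x \<longleftrightarrow>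
     fst (f y) \<ge> fst (f x) \<and> snd (f y) \<ge> snd (f x) \<and>
     (fst (f y) > fst (f x) \<or> snd (f y) > snd (f x))"

definition pareto_set :: "biobj \<Rightarrow> nat \<Rightarrow> bitstr set" where
  "pareto_set f n = {x \<in> cube n. \<not> (\<exists>y \<in> cube n. dominates f y x)}"

definition population :: "biobj \<Rightarrow> nat \<Rightarrow> bitstr set \<Rightarrow> bool" where
  "population f n P \<longleftrightarrow> P \<subseteq> cube n \<and> (\<forall>x\<in>P. \<forall>y\<in>P. \<not> dominates f x y) \<and> inj_on f P"

definition hamming_neighbour :: "bitstr \<Rightarrow> bitstr \<Rightarrow> bool" where
  "hamming_neighbour x y \<longleftrightarrow>
     length x = length y \<and> card {i. i < length x \<and> x ! i \<noteq> y ! i} = 1"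

definition good :: "biobj \<Rightarrow> nat \<Rightarrow> bitstr set \<Rightarrow> bitstr \<Rightarrow> bool" where
  "good f n P x \<longleftrightarrow> x \<in> P \<inter> pareto_set f n \<and>
     (\<exists>y. hamming_neighbour x y \<and> y \<in> pareto_set f n \<and> f y \<notin> f ` P)"

definition bad :: "biobj \<Rightarrow> nat \<Rightarrow> bitstr set \<Rightarrow> bitstr \<Rightarrow> bool" where
  "bad f n P x \<longleftrightarrow> x \<in> P \<inter> pareto_set f n \<and> \<not> good f n P x"

definition diversity_favouring ::
    "biobj \<Rightarrow> nat \<Rightarrow> (bitstr \<Rightarrow> bitstr set \<Rightarrow> ereal) \<Rightarrow> bitstr set \<Rightarrow> bool" where
  "diversity_favouring f n score S \<longleftrightarrow>
     (\<forall>P. population f n P \<longrightarrow>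
        (\<forall>x \<in> P \<inter> pareto_set f n \<inter> S. \<forall>y \<in> P \<inter> pareto_set f n \<inter> S.
            bad f n P x \<and> good f n P y \<longrightarrow> score x P < score y P))"

text \<open>P is sorted ascending by g (some sorting, ties broken arbitrarily);
 the first and last get infinity, inner points get (g(next) - g(prev))/(gmax-gmin).\<close>
definition cd_objective :: "(bitstr \<Rightarrow> nat) \<Rightarrow> real \<Rightarrow> real \<Rightarrow> bitstr set \<Rightarrow> bitstr \<Rightarrow> ereal" where
  "cd_objective g gmax gmin P x =
     (let xs = (SOME xs. distinct xs \<and> set xs = P \<and> sorted (map g xs));
          l = length xs;
          i = (THE i. i < l \<and> xs ! i = x)
      in if i = 0 \<or> i = l - 1 then \<infinity>
         else ereal ((real (g (xs ! (i + 1))) - real (g (xs ! (i - 1)))) / (gmax - gmin)))"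

definition obj_max :: "(bitstr \<Rightarrow> nat) \<Rightarrow> nat \<Rightarrow> real" where
  "obj_max g n = real (Max (g ` cube n))"

definition obj_min :: "(bitstr \<Rightarrow> nat) \<Rightarrow> nat \<Rightarrow> real" where
  "obj_min g n = real (Min (g ` cube n))"

definition CDC :: "biobj \<Rightarrow> nat \<Rightarrow> bitstr \<Rightarrow> bitstr set \<Rightarrow> ereal" where
  "CDC f n x P =
     cd_objective (\<lambda>z. fst (f z)) (obj_max (\<lambda>z. fst (f z)) n) (obj_min (\<lambda>z. fst (f z)) n) P x
   + cd_objective (\<lambda>z. snd (f z)) (obj_max (\<lambda>z. snd (f z)) n) (obj_min (\<lambda>z. snd (f z)) n) P x"

end

theory Submission
  imports Defs
begin


lemma finite_cube: "finite (cube n)"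
proof -
  have "cube n = {xs. set xs \<subseteq> (UNIV::bool set) \<and> length xs = n}" by (auto simp: cube_def)
  thus ?thesis using finite_lists_length_eq[of "UNIV::bool set" n] by simp
qed

lemma cd_list:
  assumes fin: "finite P" and inj: "inj_on g P" and xP: "x \<in> P"
  shows "\<exists>xs i. set xs = P \<and> distinct xs \<and> sorted_wrt (\<lambda>a b. g a < g b) xs \<and> i < length xs
     \<and> xs ! i = x \<and> cd_objective g M m P x = (if i = 0 \<or> i = length xs - 1 then \<infinity>
         else ereal ((real (g (xs ! (i + 1))) - real (g (xs ! (i - 1)))) / (M - m)))"
proof -
  have ex: "\<exists>xs. distinct xs \<and> set xs = P \<and> sorted (map g xs)"
  proof -
    obtain ys where "set ys = P" "distinct ys" using finite_distinct_list[OF fin] by blast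
    thus ?thesis by (intro exI[of _ "sort_key g ys"]) simp
  qed
  define xs where "xs = (SOME xs. distinct xs \<and> set xs = P \<and> sorted (map g xs))"
  have xs: "distinct xs" "set xs = P" "sorted (map g xs)"
    using someI_ex[OF ex] unfolding xs_def by auto
  have "distinct (map g xs)" using xs inj by (simp add: distinct_map)
  hence "sorted_wrt (<) (map g xs)" using xs(3) strict_sorted_iff by blast
  hence sw: "sorted_wrt (\<lambda>a b. g a < g b) xs" by (simp add: sorted_wrt_map)
  obtain i where i: "i < length xs" "xs ! i = x" using xP xs(2) by (metis in_set_conv_nth)
  have the: "(THE i. i < length xs \<and> xs ! i = x) = i"
    using i xs(1) by (auto intro!: the_equality simp: nth_eq_iff_index_eq)
  show ?thesis
    apply (rule exI[of _ xs], rule exI[of _ i])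
    using xs sw i the by (simp add: cd_objective_def Let_def xs_def[symmetric])
qed

lemma sw_less:
  assumes "sorted_wrt (\<lambda>a b. (g a :: nat) < g b) xs" "i < length xs" "j < length xs"
    "g (xs ! j) < g (xs ! i)"
  shows "j < i"
proof (rule ccontr)
  assume "\<not> j < i"
  then consider "j = i" | "i < j" by linarith
  thus False
  proof cases
    case 1 thus ?thesis using assms by simp
  next
    case 2 thus ?thesis using sorted_wrt_nth_less[OF assms(1) 2 assms(3)] assms(4) by simp
  qed
qed

lemma cd_end:
  assumes fin: "finite P" and inj: "inj_on g P" and xP: "x \<in> P"
    and h: "(\<forall>a\<in>P. \<not> g a < g x) \<or> (\<forall>c\<in>P. \<not> g x < g c)"
  shows "cd_objective g M m P x = \<infinity>"
proof -
  obtain xs i where L: "set xs = P" "distinct xs" "sorted_wrt (\<lambda>a b. g a < g b) xs" "i < length xs"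
     "xs ! i = x" "cd_objective g M m P x = (if i = 0 \<or> i = length xs - 1 then \<infinity>
         else ereal ((real (g (xs ! (i + 1))) - real (g (xs ! (i - 1)))) / (M - m)))"
    using cd_list[OF fin inj xP] by blast
  show ?thesis
  proof (cases "i = 0 \<or> i = length xs - 1")
    case True thus ?thesis using L by simp
  next
    case False
    have i1: "i + 1 < length xs" using L(4) False by auto
    have "g (xs ! (i - 1)) < g x" using sorted_wrt_nth_less[OF L(3), of "i - 1" i] L False by simp
    moreover have "g x < g (xs ! (i + 1))" using sorted_wrt_nth_less[OF L(3), of i "i + 1"] L \<open>i + 1 < length xs\<close> by simp
    moreover have "xs ! (i - 1) \<in> P" "xs ! (i + 1) \<in> P" using L False by auto
    ultimately show ?thesis using h by blast
  qed
qed

lemma cd_inner: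
  assumes fin: "finite P" and inj: "inj_on g P" and xP: "x \<in> P"
    and a: "a \<in> P" "g a < g x" and c: "c \<in> P" "g x < g c"
  shows "\<exists>p\<in>P. \<exists>q\<in>P. g p < g x \<and> g x < g q \<and> (\<forall>z\<in>P. g z < g x \<longrightarrow> g z \<le> g p)
     \<and> (\<forall>z\<in>P. g x < g z \<longrightarrow> g q \<le> g z)
     \<and> cd_objective g M m P x = ereal ((real (g q) - real (g p)) / (M - m))"
proof -
  obtain xs i where L: "set xs = P" "distinct xs" "sorted_wrt (\<lambda>a b. g a < g b) xs" "i < length xs"
     "xs ! i = x" "cd_objective g M m P x = (if i = 0 \<or> i = length xs - 1 then \<infinity>
         else ereal ((real (g (xs ! (i + 1))) - real (g (xs ! (i - 1)))) / (M - m)))"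
    using cd_list[OF fin inj xP] by blast
  obtain ja where ja: "ja < length xs" "xs ! ja = a" using a L(1) by (metis in_set_conv_nth)
  obtain jc where jc: "jc < length xs" "xs ! jc = c" using c L(1) by (metis in_set_conv_nth)
  have "ja < i" using sw_less[OF L(3) L(4) ja(1)] ja L a by simp
  have "i < jc" using sw_less[OF L(3) jc(1) L(4)] jc L c by simp
  have ni: "\<not> (i = 0 \<or> i = length xs - 1)" using \<open>ja < i\<close> \<open>i < jc\<close> jc by auto
  have p1: "g (xs ! (i - 1)) < g x" using sorted_wrt_nth_less[OF L(3), of "i - 1" i] L ni by simp
  have i1: "i + 1 < length xs" using L(4) ni by auto
  have q1: "g x < g (xs ! (i + 1))" using sorted_wrt_nth_less[OF L(3), of i "i + 1"] L i1 by simp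
  have p2: "\<forall>z\<in>P. g z < g x \<longrightarrow> g z \<le> g (xs ! (i - 1))"
  proof (intro ballI impI)
    fix z assume "z \<in> P" "g z < g x"
    then obtain j where j: "j < length xs" "xs ! j = z" using L(1) by (metis in_set_conv_nth)
    have "j < i" using sw_less[OF L(3) L(4) j(1)] j L \<open>g z < g x\<close> by simp
    show "g z \<le> g (xs ! (i - 1))"
    proof (cases "j = i - 1")
      case True thus ?thesis using j by simp
    next
      case False
      hence "j < i - 1" using \<open>j < i\<close> by linarith
      have "i - 1 < length xs" using L(4) by linarith
      thus ?thesis using sorted_wrt_nth_less[OF L(3), of j "i - 1"] j L \<open>j < i - 1\<close> by simp
    qed
  qed
  have q2: "\<forall>z\<in>P. g x < g z \<longrightarrow> g (xs ! (i + 1)) \<le> g z"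
  proof (intro ballI impI)
    fix z assume "z \<in> P" "g x < g z"
    then obtain j where j: "j < length xs" "xs ! j = z" using L(1) by (metis in_set_conv_nth)
    have "i < j" using sw_less[OF L(3) j(1) L(4)] j L \<open>g x < g z\<close> by simp
    show "g (xs ! (i + 1)) \<le> g z"
    proof (cases "j = i + 1")
      case True thus ?thesis using j by simp
    next
      case False
      hence "i + 1 < j" using \<open>i < j\<close> by linarith
      thus ?thesis using sorted_wrt_nth_less[OF L(3), of "i + 1" j] j L by simp
    qed
  qed
  have "xs ! (i - 1) \<in> P" "xs ! (i + 1) \<in> P" using L ni by auto
  moreover have "cd_objective g M m P x = ereal ((real (g (xs ! (i + 1))) - real (g (xs ! (i - 1)))) / (M - m))"
    using L(6) ni by simp
  ultimately show ?thesis using p1 q1 p2 q2 by blast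
qed



lemma cd_not_minf:
  assumes "finite P" "inj_on g P" "x \<in> P"
  shows "cd_objective g M m P x \<noteq> -\<infinity>"
  using cd_list[OF assms, of M m] by (auto split: if_splits)

lemma pop_finite: "population f n P \<Longrightarrow> finite P"
  using finite_cube unfolding population_def by (meson finite_subset)

lemma pop_mono:
  assumes "population f n P" "z \<in> P" "w \<in> P"
  shows "fst (f z) < fst (f w) \<longleftrightarrow> snd (f w) < snd (f z)"
  using assms unfolding population_def dominates_def
  by (metis linorder_not_le order_less_imp_le)

lemma pop_inj1:
  assumes "population f n P"
  shows "inj_on (\<lambda>z. fst (f z)) P"
proof (rule inj_onI)
  fix z w assume zw: "z \<in> P" "w \<in> P" "fst (f z) = fst (f w)"
  have "snd (f z) = snd (f w)"
    using assms zw unfolding population_def dominates_def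
    by (metis linorder_neqE_nat order_refl order_less_imp_le)
  hence "f z = f w" using zw by (simp add: prod_eq_iff)
  thus "z = w" using assms zw unfolding population_def inj_on_def by blast
qed

lemma pop_inj2:
  assumes "population f n P"
  shows "inj_on (\<lambda>z. snd (f z)) P"
proof (rule inj_onI)
  fix z w assume zw: "z \<in> P" "w \<in> P" "snd (f z) = snd (f w)"
  have "fst (f z) = fst (f w)"
    using assms zw unfolding population_def dominates_def
    by (metis linorder_neqE_nat order_refl order_less_imp_le)
  hence "f z = f w" using zw by (simp add: prod_eq_iff)
  thus "z = w" using assms zw unfolding population_def inj_on_def by blast
qed

lemma compare:
  fixes f :: biobj
  assumes pop: "population f n P" and npos: "n > 0"
    and D1: "obj_max (\<lambda>z. fst (f z)) n - obj_min (\<lambda>z. fst (f z)) n = real n"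
    and D2: "obj_max (\<lambda>z. snd (f z)) n - obj_min (\<lambda>z. snd (f z)) n = real n"
    and sum: "\<forall>z\<in>P. fst (f z) + snd (f z) \<le> n"
    and xP: "x \<in> P" and yP: "y \<in> P"
    and ysum: "fst (f y) + snd (f y) = n"
    and x1: "fst (f x) \<ge> 1" "snd (f x) \<ge> 1"
    and xa: "(fst (f x) - 1, snd (f x) + 1) \<in> f ` P"
    and xc: "(fst (f x) + 1, snd (f x) - 1) \<in> f ` P"
    and ymiss: "(fst (f y) - 1, snd (f y) + 1) \<notin> f ` P \<or> (fst (f y) + 1, snd (f y) - 1) \<notin> f ` P"
  shows "CDC f n x P < CDC f n y P"
proof -
  define g1 where "g1 = (\<lambda>z. fst (f z))"
  define g2 where "g2 = (\<lambda>z. snd (f z))"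
  define M1 where "M1 = obj_max g1 n"
  define m1 where "m1 = obj_min g1 n"
  define M2 where "M2 = obj_max g2 n"
  define m2 where "m2 = obj_min g2 n"
  have CDC: "\<And>u. CDC f n u P = cd_objective g1 M1 m1 P u + cd_objective g2 M2 m2 P u"
    by (simp add: CDC_def g1_def g2_def M1_def m1_def M2_def m2_def)
  have fin: "finite P" using pop_finite[OF pop] .
  have inj1: "inj_on g1 P" using pop_inj1[OF pop] by (simp add: g1_def)
  have inj2: "inj_on g2 P" using pop_inj2[OF pop] by (simp add: g2_def)
  have mono: "\<And>z w. z \<in> P \<Longrightarrow> w \<in> P \<Longrightarrow> g1 z < g1 w \<longleftrightarrow> g2 w < g2 z"
    using pop_mono[OF pop] by (simp add: g1_def g2_def)
  have fe: "\<And>z. f z = (g1 z, g2 z)" by (simp add: g1_def g2_def)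
  have D1': "M1 - m1 = real n" using D1 by (simp add: M1_def m1_def g1_def)
  have D2': "M2 - m2 = real n" using D2 by (simp add: M2_def m2_def g2_def)
  have sum': "\<And>z. z \<in> P \<Longrightarrow> g1 z + g2 z \<le> n" using sum by (simp add: g1_def g2_def)
  obtain a where a0: "a \<in> P" "f a = (g1 x - 1, g2 x + 1)" using xa by (auto simp: g1_def g2_def)
  hence a: "a \<in> P" "g1 a = g1 x - 1" "g2 a = g2 x + 1" by (auto simp: g1_def g2_def)
  obtain c where c0: "c \<in> P" "f c = (g1 x + 1, g2 x - 1)" using xc by (auto simp: g1_def g2_def)
  hence c: "c \<in> P" "g1 c = g1 x + 1" "g2 c = g2 x - 1" by (auto simp: g1_def g2_def)
  have x1': "g1 x \<ge> 1" "g2 x \<ge> 1" using x1 by (auto simp: g1_def g2_def)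
  obtain p q where pq: "p \<in> P" "q \<in> P" "g1 p < g1 x" "g1 x < g1 q"
      "\<forall>z\<in>P. g1 z < g1 x \<longrightarrow> g1 z \<le> g1 p" "\<forall>z\<in>P. g1 x < g1 z \<longrightarrow> g1 q \<le> g1 z"
      "cd_objective g1 M1 m1 P x = ereal ((real (g1 q) - real (g1 p)) / (M1 - m1))"
    using cd_inner[OF fin inj1 xP a(1) _ c(1), of M1 m1] a c x1' by auto
  have "g1 a < g1 x" using a x1' by linarith
  hence "g1 a \<le> g1 p" using pq(5) a(1) by blast
  hence e1: "g1 p = g1 x - 1" using pq(3) a by linarith
  have "g1 x < g1 c" using c by simp
  hence "g1 q \<le> g1 c" using pq(6) c(1) by blast
  hence e2: "g1 q = g1 x + 1" using pq(4) c by linarith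
  have cx1: "cd_objective g1 M1 m1 P x = ereal (2 / real n)"
    using pq(7) D1' x1' e1 e2 by (simp add: of_nat_diff)
  obtain p' q' where pq': "p' \<in> P" "q' \<in> P" "g2 p' < g2 x" "g2 x < g2 q'"
      "\<forall>z\<in>P. g2 z < g2 x \<longrightarrow> g2 z \<le> g2 p'" "\<forall>z\<in>P. g2 x < g2 z \<longrightarrow> g2 q' \<le> g2 z"
      "cd_objective g2 M2 m2 P x = ereal ((real (g2 q') - real (g2 p')) / (M2 - m2))"
    using cd_inner[OF fin inj2 xP c(1) _ a(1), of M2 m2] a c x1' by auto
  have "g2 c < g2 x" using c x1' by linarith
  hence "g2 c \<le> g2 p'" using pq'(5) c(1) by blast
  hence e3: "g2 p' = g2 x - 1" using pq'(3) c by linarith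
  have "g2 x < g2 a" using a by simp
  hence "g2 q' \<le> g2 a" using pq'(6) a(1) by blast
  hence e4: "g2 q' = g2 x + 1" using pq'(4) a by linarith
  have cx2: "cd_objective g2 M2 m2 P x = ereal (2 / real n)"
    using pq'(7) D2' x1' e3 e4 by (simp add: of_nat_diff)
  have cx: "CDC f n x P = ereal (4 / real n)" using cx1 cx2 CDC by simp
  show ?thesis
  proof (cases "(\<exists>a\<in>P. g1 a < g1 y) \<and> (\<exists>c\<in>P. g1 y < g1 c)")
    case False
    hence "cd_objective g1 M1 m1 P y = \<infinity>" using cd_end[OF fin inj1 yP] by blast
    moreover have "cd_objective g2 M2 m2 P y \<noteq> -\<infinity>" using cd_not_minf[OF fin inj2 yP] .
    ultimately have "CDC f n y P = \<infinity>" using CDC by simp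
    thus ?thesis using cx by simp
  next
    case True
    then obtain a' c' where ac': "a' \<in> P" "g1 a' < g1 y" "c' \<in> P" "g1 y < g1 c'" by blast
    obtain p q where pq: "p \<in> P" "q \<in> P" "g1 p < g1 y" "g1 y < g1 q"
      "cd_objective g1 M1 m1 P y = ereal ((real (g1 q) - real (g1 p)) / (M1 - m1))"
      using cd_inner[OF fin inj1 yP ac'(1,2) ac'(3,4), of M1 m1] by blast
    have "g2 c' < g2 y" "g2 y < g2 a'" using mono ac' yP by auto
    then obtain p' q' where pq': "p' \<in> P" "q' \<in> P" "g2 p' < g2 y" "g2 y < g2 q'"
      "cd_objective g2 M2 m2 P y = ereal ((real (g2 q') - real (g2 p')) / (M2 - m2))"
      using cd_inner[OF fin inj2 yP ac'(3) _ ac'(1), of M2 m2] by blast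
    have m1: "g2 p > g2 y" using mono pq yP by auto
    have m2: "g1 p' > g1 y" using mono pq' yP by auto
    have s1: "g1 p + g2 p \<le> n" "g1 p' + g2 p' \<le> n" using sum' pq pq' by auto
    have ys: "g1 y + g2 y = n" using ysum by (simp add: g1_def g2_def)
    have miss: "\<not> (g1 p = g1 y - 1 \<and> g2 p = g2 y + 1) \<or> \<not> (g1 p' = g1 y + 1 \<and> g2 p' = g2 y - 1)"
    proof (cases "(fst (f y) - 1, snd (f y) + 1) \<notin> f ` P")
      case True
      have "f p \<in> f ` P" using pq(1) by blast
      have "\<not> (g1 p = g1 y - 1 \<and> g2 p = g2 y + 1)"
      proof
        assume h: "g1 p = g1 y - 1 \<and> g2 p = g2 y + 1"
        have "f p = (fst (f y) - 1, snd (f y) + 1)" unfolding prod_eq_iff using h by (simp add: g1_def g2_def)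
        thus False using True \<open>f p \<in> f ` P\<close> by simp
      qed
      thus ?thesis by (rule disjI1)
    next
      case False
      hence F: "(fst (f y) + 1, snd (f y) - 1) \<notin> f ` P" using ymiss by blast
      have "f p' \<in> f ` P" using pq'(1) by blast
      show ?thesis
      proof (rule disjI2)
        show "\<not> (g1 p' = g1 y + 1 \<and> g2 p' = g2 y - 1)"
        proof
          assume h: "g1 p' = g1 y + 1 \<and> g2 p' = g2 y - 1"
          have "f p' = (fst (f y) + 1, snd (f y) - 1)" unfolding prod_eq_iff using h by (simp add: g1_def g2_def)
          thus False using F \<open>f p' \<in> f ` P\<close> by simp
        qed
      qed
    qed
    have key: "g1 q - g1 p + (g2 q' - g2 p') \<ge> 5"
    proof (cases "\<not> (g1 p = g1 y - 1 \<and> g2 p = g2 y + 1)")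
      case True
      have "g1 p + 2 \<le> g1 y" using True m1 s1(1) ys pq(3) by linarith
      thus ?thesis using pq(3,4) pq'(3,4) by linarith
    next
      case False
      hence F: "\<not> (g1 p' = g1 y + 1 \<and> g2 p' = g2 y - 1)" using miss by blast
      have "g2 p' + 2 \<le> g2 y" using F m2 s1(2) ys pq'(3) by linarith
      thus ?thesis using pq(3,4) pq'(3,4) by linarith
    qed
    have "CDC f n y P = ereal ((real (g1 q - g1 p) + real (g2 q' - g2 p')) / real n)"
      using CDC pq(5) pq'(5) D1' D2' pq(3,4) pq'(3,4)
      by (simp add: of_nat_diff add_divide_distrib)
    moreover have "real (g1 q - g1 p) + real (g2 q' - g2 p') \<ge> 5" using key by linarith
    ultimately show ?thesis using cx npos by (simp add: divide_strict_right_mono)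
  qed
qed



lemma obj_range:
  assumes "\<forall>z\<in>cube n. g z \<le> n" "z1 \<in> cube n" "g z1 = n" "z0 \<in> cube n" "g z0 = 0"
  shows "obj_max g n - obj_min g n = real n"
proof -
  have fin: "finite (g ` cube n)" using finite_cube by simp
  have "Max (g ` cube n) = n" using assms fin by (intro Max_eqI) auto
  moreover have "Min (g ` cube n) = 0" using assms fin by (intro Min_eqI) auto
  ultimately show ?thesis by (simp add: obj_max_def obj_min_def)
qed

lemma ones_upd:
  "i < length x \<Longrightarrow> length (filter id (x[i:=v])) + (if x!i then 1 else 0)
     = length (filter id x) + (if v then 1 else 0)"
proof (induction x arbitrary: i)
  case Nil thus ?case by simp
next
  case (Cons a x)
  show ?case
  proof (cases i)
    case 0 thus ?thesis by simp
  next
    case (Suc j)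
    hence "j < length x" using Cons.prems by simp
    from Cons.IH[OF this] show ?thesis using Suc by (cases v; cases "x ! j") auto
  qed
qed

lemma ham_ones:
  assumes "hamming_neighbour x y"
  shows "length (filter id y) = length (filter id x) + 1 \<or> length (filter id x) = length (filter id y) + 1"
proof -
  have len: "length x = length y" and c: "card {i. i < length x \<and> x ! i \<noteq> y ! i} = 1"
    using assms by (auto simp: hamming_neighbour_def)
  then obtain i0 where i0: "{i. i < length x \<and> x ! i \<noteq> y ! i} = {i0}" by (meson card_1_singletonE)
  hence i0l: "i0 < length x" "x ! i0 \<noteq> y ! i0" by auto
  have "y = x[i0 := y ! i0]"
  proof (rule nth_equalityI)
    show "length y = length (x[i0 := y ! i0])" using len by simp
  next
    fix j assume "j < length y"
    thus "y ! j = x[i0 := y ! i0] ! j" using i0 len by (cases "j = i0") (auto simp: nth_list_update)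
  qed
  hence "length (filter id y) + (if x!i0 then 1 else 0) = length (filter id x) + (if y ! i0 then 1 else 0)"
    using ones_upd[OF i0l(1), of "y ! i0"] by simp
  thus ?thesis using i0l(2) by (cases "x ! i0") auto
qed

lemma flip_neighbour:
  assumes "i < length x"
  shows "hamming_neighbour x (x[i := \<not> x ! i])"
proof -
  have "{j. j < length x \<and> x ! j \<noteq> x[i := \<not> x ! i] ! j} = {i}"
    using assms by (auto simp: nth_list_update)
  thus ?thesis by (simp add: hamming_neighbour_def)
qed

lemma LO_nth: "i < LO x \<Longrightarrow> x ! i"
  unfolding LO_def by (metis nth_mem set_takeWhileD takeWhile_nth id_apply)

lemma TZ_nth:
  assumes "i < length x" "length x - TZ x \<le> i"
  shows "\<not> x ! i"
proof -
  let ?j = "length x - 1 - i"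
  have j: "?j < TZ x" using assms by linarith
  have "takeWhile Not (rev x) ! ?j = rev x ! ?j" using j unfolding TZ_def by (rule takeWhile_nth)
  moreover have "rev x ! ?j = x ! i" using assms by (simp add: rev_nth)
  moreover have "\<not> (takeWhile Not (rev x) ! ?j)"
    using j unfolding TZ_def by (metis nth_mem set_takeWhileD)
  ultimately show ?thesis by simp
qed

lemma LO_le: "LO x \<le> length x"
  unfolding LO_def by (simp add: length_takeWhile_le)

lemma TZ_le: "TZ x \<le> length x"
  unfolding TZ_def by (metis length_rev length_takeWhile_le)

lemma LO_TZ_le: "LO x + TZ x \<le> length x"
proof (rule ccontr)
  assume "\<not> ?thesis"
  hence h: "length x < LO x + TZ x" by simp
  let ?i = "length x - TZ x"
  have "?i < LO x" using h TZ_le[of x] by linarith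
  moreover have "?i < length x" using h LO_le[of x] TZ_le[of x] by linarith
  ultimately show False using LO_nth TZ_nth by blast
qed

definition blk :: "nat \<Rightarrow> nat \<Rightarrow> bitstr" where
  "blk k n = replicate k True @ replicate (n - k) False"

lemma blk_len: "k \<le> n \<Longrightarrow> length (blk k n) = n" by (simp add: blk_def)

lemma LO_blk: "k \<le> n \<Longrightarrow> LO (blk k n) = k"
  unfolding LO_def blk_def by (cases "n - k") (auto simp: takeWhile_append)

lemma TZ_blk: "k \<le> n \<Longrightarrow> TZ (blk k n) = n - k"
  unfolding TZ_def blk_def by (cases k) (auto simp: takeWhile_append)

lemma ones_blk: "k \<le> n \<Longrightarrow> length (filter id (blk k n)) = k"
  unfolding blk_def by simp

lemma blk_eq:
  assumes "LO x + TZ x = length x"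
  shows "x = blk (LO x) (length x)"
proof (rule nth_equalityI)
  show "length x = length (blk (LO x) (length x))" using LO_le by (simp add: blk_len)
next
  fix i assume i: "i < length x"
  show "x ! i = blk (LO x) (length x) ! i"
  proof (cases "i < LO x")
    case True thus ?thesis using LO_nth by (simp add: blk_def nth_append)
  next
    case False
    hence "\<not> x ! i" using TZ_nth[OF i] assms by linarith
    thus ?thesis using False i by (simp add: blk_def nth_append)
  qed
qed

lemma lotz_pareto:
  assumes "x \<in> cube n"
  shows "x \<in> pareto_set lotz n \<longleftrightarrow> LO x + TZ x = n"
proof
  assume p: "x \<in> pareto_set lotz n"
  show "LO x + TZ x = n"
  proof (rule ccontr)
    assume ne: "LO x + TZ x \<noteq> n"
    have len: "length x = n" using assms by (simp add: cube_def)
    hence lt: "LO x + TZ x < n" using ne LO_TZ_le[of x] by linarith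
    have kn: "LO x \<le> n" using LO_le len by metis
    have "blk (LO x) n \<in> cube n" using kn by (simp add: cube_def blk_len)
    moreover have "TZ x < n - LO x" using lt by linarith
    moreover have "dominates lotz (blk (LO x) n) x"
      using calculation(2) kn by (simp add: dominates_def lotz_def LO_blk TZ_blk)
    ultimately show False using p by (auto simp: pareto_set_def)
  qed
next
  assume s: "LO x + TZ x = n"
  have "\<not> dominates lotz y x" if "y \<in> cube n" for y
    using that s LO_TZ_le[of y] by (auto simp: dominates_def lotz_def cube_def)
  thus "x \<in> pareto_set lotz n" using assms by (auto simp: pareto_set_def)
qed

lemma omm_pareto: "pareto_set oneminmax n = cube n"
proof -
  have "\<not> dominates oneminmax y x" if "y \<in> cube n" "x \<in> cube n" for x y
  proof -
    have "length (filter id y) \<le> n" "length (filter id x) \<le> n"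
      using that by (auto simp: cube_def intro: order_trans[OF length_filter_le])
    moreover have "length x = n" "length y = n" using that by (auto simp: cube_def)
    ultimately show ?thesis by (auto simp: dominates_def oneminmax_def)
  qed
  thus ?thesis by (auto simp: pareto_set_def)
qed



lemma exists_true:
  assumes "length x = n" "x \<noteq> replicate n False"
  shows "\<exists>i<n. x ! i"
proof (rule ccontr)
  assume "\<not> ?thesis"
  hence "x = replicate n False" using assms(1) by (intro nth_equalityI) auto
  thus False using assms(2) by simp
qed

lemma exists_false:
  assumes "length x = n" "x \<noteq> replicate n True"
  shows "\<exists>i<n. \<not> x ! i"
proof (rule ccontr)
  assume "\<not> ?thesis"
  hence "x = replicate n True" using assms(1) by (intro nth_equalityI) auto
  thus False using assms(2) by simp
qed

lemma blk_nth: "i < n \<Longrightarrow> k \<le> n \<Longrightarrow> blk k n ! i = (i < k)"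
  unfolding blk_def by (simp add: nth_append)

lemma bad_nb:
  assumes "bad f n P x" "hamming_neighbour x z" "z \<in> pareto_set f n"
  shows "f z \<in> f ` P"
  using assms unfolding bad_def good_def by blast

theorem lemma2:
  fixes n :: nat
  shows "diversity_favouring oneminmax n (CDC oneminmax n)
           (cube n - {replicate n False, replicate n True})
       \<and> diversity_favouring lotz n (CDC lotz n)
           (cube n - {replicate n False, replicate n True})"
proof (rule conjI)
  show "diversity_favouring oneminmax n (CDC oneminmax n) (cube n - {replicate n False, replicate n True})"
    unfolding diversity_favouring_def
  proof (intro allI impI ballI)
    fix P x y
    assume pop: "population oneminmax n P"
    let ?S = "cube n - {replicate n False, replicate n True}"
    assume xm: "x \<in> P \<inter> pareto_set oneminmax n \<inter> ?S"
      and ym: "y \<in> P \<inter> pareto_set oneminmax n \<inter> ?S"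
      and bg: "bad oneminmax n P x \<and> good oneminmax n P y"
    define ones where "ones = (\<lambda>z::bitstr. length (filter id z))"
    have onesle: "\<And>z. ones z \<le> length z" by (simp add: ones_def length_filter_le)
    have fo: "\<And>z. oneminmax z = (ones z, length z - ones z)" by (simp add: oneminmax_def ones_def)
    have Pc: "P \<subseteq> cube n" using pop by (simp add: population_def)
    have xl: "length x = n" using xm by (simp add: cube_def)
    have yl: "length y = n" using ym by (simp add: cube_def)
    obtain i where i: "i < n" "x ! i" using exists_true[OF xl] xm by auto
    obtain j where j: "j < n" "\<not> x ! j" using exists_false[OF xl] xm by auto
    define z1 where "z1 = x[i := \<not> x ! i]"
    define z2 where "z2 = x[j := \<not> x ! j]"
    have z1n: "hamming_neighbour x z1" unfolding z1_def using flip_neighbour[of i x] i xl by simp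
    have z2n: "hamming_neighbour x z2" unfolding z2_def using flip_neighbour[of j x] j xl by simp
    have z1c: "z1 \<in> cube n" "z2 \<in> cube n" using xl by (auto simp: z1_def z2_def cube_def)
    have o1: "ones z1 + 1 = ones x" using ones_upd[of i x False] i xl by (simp add: z1_def ones_def)
    have o2: "ones z2 = ones x + 1" using ones_upd[of j x True] j xl by (simp add: z2_def ones_def)
    have o2n: "ones z2 \<le> n" using onesle[of z2] z1c by (simp add: cube_def)
    have fz1: "oneminmax z1 \<in> oneminmax ` P"
      using bad_nb[OF _ z1n, of oneminmax n P] bg z1c by (simp add: omm_pareto)
    have fz2: "oneminmax z2 \<in> oneminmax ` P"
      using bad_nb[OF _ z2n, of oneminmax n P] bg z1c by (simp add: omm_pareto)
    obtain z where z: "hamming_neighbour y z" "z \<in> pareto_set oneminmax n" "oneminmax z \<notin> oneminmax ` P"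
      using bg by (auto simp: good_def)
    have zl: "length z = n" using z(1) yl by (simp add: hamming_neighbour_def)
    have oy: "ones y \<le> n" using onesle[of y] yl by simp
    have ymiss: "(fst (oneminmax y) - 1, snd (oneminmax y) + 1) \<notin> oneminmax ` P
       \<or> (fst (oneminmax y) + 1, snd (oneminmax y) - 1) \<notin> oneminmax ` P"
    proof (cases "ones z = ones y + 1")
      case True
      hence "oneminmax z = (fst (oneminmax y) + 1, snd (oneminmax y) - 1)" using fo zl yl by simp
      thus ?thesis using z(3) by simp
    next
      case False
      hence "ones y = ones z + 1" using ham_ones[OF z(1)] by (simp add: ones_def)
      hence "oneminmax z = (fst (oneminmax y) - 1, snd (oneminmax y) + 1)" using fo zl yl oy by simp
      thus ?thesis using z(3) by simp
    qed
    show "CDC oneminmax n x P < CDC oneminmax n y P"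
    proof (rule compare[OF pop])
      show "n > 0" using i by simp
      show "obj_max (\<lambda>z. fst (oneminmax z)) n - obj_min (\<lambda>z. fst (oneminmax z)) n = real n"
        by (rule obj_range[of _ _ "replicate n True" "replicate n False"])
           (auto simp: fo cube_def ones_def length_filter_le)
      show "obj_max (\<lambda>z. snd (oneminmax z)) n - obj_min (\<lambda>z. snd (oneminmax z)) n = real n"
        by (rule obj_range[of _ _ "replicate n False" "replicate n True"])
           (auto simp: fo cube_def ones_def length_filter_le)
      show "\<forall>z\<in>P. fst (oneminmax z) + snd (oneminmax z) \<le> n"
        using Pc onesle by (auto simp: fo cube_def)
      show "x \<in> P" "y \<in> P" using xm ym by auto
      show "fst (oneminmax y) + snd (oneminmax y) = n" using fo yl oy by simp
      show "fst (oneminmax x) \<ge> 1" "snd (oneminmax x) \<ge> 1" using fo xl o1 o2 o2n by auto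
      show "(fst (oneminmax x) - 1, snd (oneminmax x) + 1) \<in> oneminmax ` P"
      proof -
        have "length z1 = n" using z1c by (simp add: cube_def)
        hence "(fst (oneminmax x) - 1, snd (oneminmax x) + 1) = oneminmax z1"
          using fo o1 xl o2 o2n by (simp; linarith)
        thus ?thesis using fz1 by simp
      qed
      show "(fst (oneminmax x) + 1, snd (oneminmax x) - 1) \<in> oneminmax ` P"
      proof -
        have "length z2 = n" using z1c by (simp add: cube_def)
        hence "(fst (oneminmax x) + 1, snd (oneminmax x) - 1) = oneminmax z2"
          using fo o1 xl o2 o2n by (simp; linarith)
        thus ?thesis using fz2 by simp
      qed
      show "(fst (oneminmax y) - 1, snd (oneminmax y) + 1) \<notin> oneminmax ` P
       \<or> (fst (oneminmax y) + 1, snd (oneminmax y) - 1) \<notin> oneminmax ` P" by (rule ymiss)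
    qed
  qed
next
  show "diversity_favouring lotz n (CDC lotz n) (cube n - {replicate n False, replicate n True})"
    unfolding diversity_favouring_def
  proof (intro allI impI ballI)
    fix P x y
    assume pop: "population lotz n P"
    let ?S = "cube n - {replicate n False, replicate n True}"
    assume xm: "x \<in> P \<inter> pareto_set lotz n \<inter> ?S"
      and ym: "y \<in> P \<inter> pareto_set lotz n \<inter> ?S"
      and bg: "bad lotz n P x \<and> good lotz n P y"
    have fl: "\<And>z. lotz z = (LO z, TZ z)" by (simp add: lotz_def)
    have Pc: "P \<subseteq> cube n" using pop by (simp add: population_def)
    have xl: "length x = n" using xm by (simp add: cube_def)
    have yl: "length y = n" using ym by (simp add: cube_def)
    have xs: "LO x + TZ x = n" using xm lotz_pareto by auto
    have ys: "LO y + TZ y = n" using ym lotz_pareto by auto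
    define k where "k = LO x"
    have xb: "x = blk k n" using blk_eq[of x] xs xl by (simp add: k_def)
    have k0: "k \<noteq> 0"
    proof
      assume "k = 0" hence "x = replicate n False" using xb by (simp add: blk_def)
      thus False using xm by simp
    qed
    have kn: "k \<noteq> n"
    proof
      assume "k = n" hence "x = replicate n True" using xb by (simp add: blk_def)
      thus False using xm by simp
    qed
    have kle: "k \<le> n" using xs k_def by simp
    have bpar: "blk j n \<in> pareto_set lotz n \<and> blk j n \<in> cube n" if "j \<le> n" for j
    proof -
      have c: "blk j n \<in> cube n" using that by (simp add: cube_def blk_len)
      thus ?thesis using lotz_pareto[OF c] that by (simp add: LO_blk TZ_blk)
    qed
    have z1e: "blk (k - 1) n = x[k - 1 := \<not> x ! (k - 1)]"
    proof (rule nth_equalityI)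
      show "length (blk (k - 1) n) = length (x[k - 1 := \<not> x ! (k - 1)])" using xl kle by (simp add: blk_len)
    next
      fix i assume "i < length (blk (k - 1) n)"
      thus "blk (k - 1) n ! i = x[k - 1 := \<not> x ! (k - 1)] ! i"
        using k0 kle xb by (auto simp: blk_def nth_append nth_list_update)
    qed
    have z2e: "blk (k + 1) n = x[k := \<not> x ! k]"
    proof (rule nth_equalityI)
      show "length (blk (k + 1) n) = length (x[k := \<not> x ! k])" using xl kle kn by (simp add: blk_len)
    next
      fix i assume "i < length (blk (k + 1) n)"
      thus "blk (k + 1) n ! i = x[k := \<not> x ! k] ! i"
      proof -
        have i: "i < n" using \<open>i < length (blk (k + 1) n)\<close> kle kn by (simp add: blk_len)
        show ?thesis using i kn kle xb xl by (simp add: blk_nth nth_list_update; linarith)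
      qed
    qed
    have z1n: "hamming_neighbour x (blk (k - 1) n)" unfolding z1e using flip_neighbour[of "k - 1" x] k0 kle xl by simp
    have z2n: "hamming_neighbour x (blk (k + 1) n)" unfolding z2e using flip_neighbour[of k x] kn kle xl by simp
    have fz1: "lotz (blk (k - 1) n) \<in> lotz ` P"
      using bad_nb[OF _ z1n, of lotz n P] bg bpar[of "k - 1"] kle by simp
    have fz2: "lotz (blk (k + 1) n) \<in> lotz ` P"
      using bad_nb[OF _ z2n, of lotz n P] bg bpar[of "k + 1"] kle kn by simp
    obtain z where z: "hamming_neighbour y z" "z \<in> pareto_set lotz n" "lotz z \<notin> lotz ` P"
      using bg by (auto simp: good_def)
    have zl: "length z = n" using z(1) yl by (simp add: hamming_neighbour_def)
    have zs: "LO z + TZ z = n" using z(2) zl lotz_pareto by (auto simp: cube_def)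
    have zb: "z = blk (LO z) n" using blk_eq[of z] zs zl by simp
    have yb: "y = blk (LO y) n" using blk_eq[of y] ys yl by simp
    have oz: "length (filter id z) = LO z" using zb ones_blk[of "LO z" n] zs by (metis le_add1)
    have oy: "length (filter id y) = LO y" using yb ones_blk[of "LO y" n] ys by (metis le_add1)
    have ymiss: "(fst (lotz y) - 1, snd (lotz y) + 1) \<notin> lotz ` P
       \<or> (fst (lotz y) + 1, snd (lotz y) - 1) \<notin> lotz ` P"
    proof (cases "LO z = LO y + 1")
      case True
      hence "lotz z = (fst (lotz y) + 1, snd (lotz y) - 1)" using fl zs ys by simp
      thus ?thesis using z(3) by simp
    next
      case False
      hence "LO y = LO z + 1" using ham_ones[OF z(1)] oz oy by simp
      hence "lotz z = (fst (lotz y) - 1, snd (lotz y) + 1)" using fl zs ys by simp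
      thus ?thesis using z(3) by simp
    qed
    show "CDC lotz n x P < CDC lotz n y P"
    proof (rule compare[OF pop])
      show "n > 0" using k0 kle by simp
      show "obj_max (\<lambda>z. fst (lotz z)) n - obj_min (\<lambda>z. fst (lotz z)) n = real n"
        by (rule obj_range[of _ _ "blk n n" "blk 0 n"])
           (auto simp: fl cube_def blk_len LO_blk intro: order_trans[OF LO_le])
      show "obj_max (\<lambda>z. snd (lotz z)) n - obj_min (\<lambda>z. snd (lotz z)) n = real n"
        by (rule obj_range[of _ _ "blk 0 n" "blk n n"])
           (auto simp: fl cube_def blk_len TZ_blk intro: order_trans[OF TZ_le])
      show "\<forall>z\<in>P. fst (lotz z) + snd (lotz z) \<le> n"
        using Pc LO_TZ_le by (auto simp: fl cube_def)
      show "x \<in> P" "y \<in> P" using xm ym by auto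
      show "fst (lotz y) + snd (lotz y) = n" using fl ys by simp
      show "fst (lotz x) \<ge> 1" "snd (lotz x) \<ge> 1" using fl xs k_def k0 kn by auto
      show "(fst (lotz x) - 1, snd (lotz x) + 1) \<in> lotz ` P"
      proof -
        have "(fst (lotz x) - 1, snd (lotz x) + 1) = lotz (blk (k - 1) n)"
          using fl xs k_def k0 kle by (simp add: LO_blk TZ_blk)
        thus ?thesis using fz1 by simp
      qed
      show "(fst (lotz x) + 1, snd (lotz x) - 1) \<in> lotz ` P"
      proof -
        have "(fst (lotz x) + 1, snd (lotz x) - 1) = lotz (blk (k + 1) n)"
          using fl xs k_def kn kle by (simp add: LO_blk TZ_blk)
        thus ?thesis using fz2 by simp
      qed
      show "(fst (lotz y) - 1, snd (lotz y) + 1) \<notin> lotz ` P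
       \<or> (fst (lotz y) + 1, snd (lotz y) - 1) \<notin> lotz ` P" by (rule ymiss)
    qed
  qed
qed

end
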